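(* Let $\mathbf{Q}=\langle Q,\vee,\cdot,\bot,e\rangle$ be a quantale, $X,Y$ non-empty sets, and $p\in Q^{X\times Y}$ strong, i.e. there is an injective map $\varepsilon:Y\to X$ such that $p(\varepsilon(y),y)=e$ for all $y\in Y$ and $p(\varepsilon(y_1),y_2)=\bot$ for all $y_1\ne y_2$ in $Y$. Let $H_p:Q^X\to Q^Y$, $H_pf(y)=\bigvee_{x\in X}f(x)\cdot p(x,y)$, and $\Lambda_p:Q^Y\to Q^X$, $\Lambda_pg(x)=\bigwedge_{y\in Y}g(y)/p(x,y)$. Then $H_p\circ\Lambda_p=\operatorname{id}_{Q^Y}$; consequently $H_p$ is surjective and $\Lambda_p$ is injective.
   Context: A quantale is a structure $\langle Q,\vee,\cdot,\bot,e\rangle$ where $\langle Q,\vee,\bot\rangle$ is a complete lattice, $\langle Q,\cdot,e\rangle$ is a monoid, and multiplication distributes over arbitrary joins on both sides; $/$ is the right residuum: $x\cdot y\le z\iff x\le z/y$. $Q^X$ denotes the set of functions $X\to Q$ with the pointwise order. *)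

theory Defs
  imports Main
begin

text \<open>A quantale: complete lattice + monoid (written multiplicatively, unit 1 = e),
  with multiplication distributing over arbitrary joins on both sides.
  The bottom element is bot = Sup {}.\<close>
class quantale = complete_lattice + monoid_mult +
  assumes Sup_distl: "x * Sup A = Sup ((\<lambda>a. x * a) ` A)"
  assumes Sup_distr: "Sup A * y = Sup ((\<lambda>a. a * y) ` A)"

text \<open>Right residuum  z / y : the greatest x with x * y \<le> z.\<close>
definition rres :: "'q::quantale \<Rightarrow> 'q \<Rightarrow> 'q" where
  "rres z y = Sup {x. x * y \<le> z}"

definition strong :: "('x \<Rightarrow> 'y \<Rightarrow> 'q::quantale) \<Rightarrow> bool" where
  "strong p \<longleftrightarrow> (\<exists>\<epsilon> :: 'y \<Rightarrow> 'x. inj \<epsilon> \<and> (\<forall>y. p (\<epsilon> y) y = 1)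
      \<and> (\<forall>y1 y2. y1 \<noteq> y2 \<longrightarrow> p (\<epsilon> y1) y2 = bot))"

definition Hp :: "('x \<Rightarrow> 'y \<Rightarrow> 'q::quantale) \<Rightarrow> ('x \<Rightarrow> 'q) \<Rightarrow> ('y \<Rightarrow> 'q)" where
  "Hp p f = (\<lambda>y. SUP x. f x * p x y)"

definition Lp :: "('x \<Rightarrow> 'y \<Rightarrow> 'q::quantale) \<Rightarrow> ('y \<Rightarrow> 'q) \<Rightarrow> ('x \<Rightarrow> 'q)" where
  "Lp p g = (\<lambda>x. INF y. rres (g y) (p x y))"

end

theory Submission
  imports Defs
begin

lemma q_mult_bot: "(x::'q::quantale) * bot = bot"
  using Sup_distl[of x "{}"] by simp

lemma q_mono_r: "(a::'q::quantale) \<le> b \<Longrightarrow> a * c \<le> b * c"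
proof -
  assume "a \<le> b"
  hence "b = Sup {a, b}" by (simp add: sup_absorb2)
  hence "b * c = Sup ((\<lambda>t. t * c) ` {a,b})" using Sup_distr by metis
  hence "b * c = sup (a * c) (b * c)" by simp
  thus ?thesis by (metis sup_ge1)
qed

lemma rres_ge: "(x::'q::quantale) * y \<le> z \<Longrightarrow> x \<le> rres z y"
  unfolding rres_def by (rule Sup_upper) simp

lemma rres_mult: "rres (z::'q::quantale) y * y \<le> z"
  unfolding rres_def Sup_distr by (auto intro: Sup_least)

theorem theorem4p4:
  fixes p :: "'x \<Rightarrow> 'y \<Rightarrow> 'q::quantale"
  assumes "strong p"
  shows "Hp p \<circ> Lp p = id \<and> surj (Hp p) \<and> inj (Lp p)"
proof -
  obtain \<epsilon> :: "'y \<Rightarrow> 'x" where e1: "\<And>y. p (\<epsilon> y) y = 1"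
    and e2: "\<And>y1 y2. y1 \<noteq> y2 \<Longrightarrow> p (\<epsilon> y1) y2 = bot"
    using assms unfolding strong_def by blast
  have key: "Hp p (Lp p g) = g" for g
  proof
    fix y
    show "Hp p (Lp p g) y = g y"
    proof (rule antisym)
      show "Hp p (Lp p g) y \<le> g y"
        unfolding Hp_def
      proof (rule SUP_least)
        fix x
        have "Lp p g x \<le> rres (g y) (p x y)" unfolding Lp_def by (rule INF_lower) simp
        hence "Lp p g x * p x y \<le> rres (g y) (p x y) * p x y" by (rule q_mono_r)
        also have "\<dots> \<le> g y" by (rule rres_mult)
        finally show "Lp p g x * p x y \<le> g y" .
      qed
    next
      have "g y \<le> Lp p g (\<epsilon> y)" unfolding Lp_def
      proof (rule INF_greatest)
        fix y'
        show "g y \<le> rres (g y') (p (\<epsilon> y) y')"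
        proof (rule rres_ge, cases "y = y'")
          case True thus "g y * p (\<epsilon> y) y' \<le> g y'" using e1 by simp
        next
          case False thus "g y * p (\<epsilon> y) y' \<le> g y'" using e2[OF False] q_mult_bot[of "g y"] by simp
        qed
      qed
      also have "\<dots> = Lp p g (\<epsilon> y) * p (\<epsilon> y) y" using e1 by simp
      also have "\<dots> \<le> Hp p (Lp p g) y" unfolding Hp_def by (rule SUP_upper) simp
      finally show "g y \<le> Hp p (Lp p g) y" .
    qed
  qed
  have c: "Hp p \<circ> Lp p = id" using key by auto
  moreover have "surj (Hp p)" using key by (metis surjI)
  moreover have "inj (Lp p)" using key by (metis injI)
  ultimately show ?thesis by blast
qed

end
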